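(* Let $A$ be a commutative ring with $1$, $M\in\operatorname{Sym}_n(A)$, $a\in A$, $v\in A^n$ and $b\in\Sigma(a)$ (with $a$ regarded as a $1\times 1$ matrix). If $av\in\Sigma(M)$, then $b^2v\in\Sigma(M)$.
   Context: $\Sigma A^2$ denotes the set of finite sums of squares in $A$. A matrix $N\in\operatorname{Sym}_n(A)$ is a sum of squares if $N=\sum_{i=1}^m w_iw_i^{t}$ for some column vectors $w_i\in A^n$. For $M\in\operatorname{Sym}_n(A)$, $\Sigma(M)$ is the set of $v\in A^n$ such that $sM=vv^{t}+N$ for some $s\in\Sigma A^2$ and some sum of squares $N\in\operatorname{Sym}_n(A)$. For $n=1$: $b\in\Sigma(a)$ iff $sa=b^2+t$ for some $s,t\in\Sigma A^2$. *)

theory Defs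
  imports "Jordan_Normal_Form.Matrix"
begin

definition sum_sq :: "'a::comm_ring_1 \<Rightarrow> bool" where
  "sum_sq s \<longleftrightarrow> (\<exists>xs. s = sum_list (map (\<lambda>x. x * x) xs))"

definition outer :: "'a::comm_ring_1 vec \<Rightarrow> 'a mat" where
  "outer v = mat (dim_vec v) (dim_vec v) (\<lambda>(i, j). v $ i * v $ j)"

definition sos_mat :: "nat \<Rightarrow> 'a::comm_ring_1 mat \<Rightarrow> bool" where
  "sos_mat n N \<longleftrightarrow> (\<exists>ws. set ws \<subseteq> carrier_vec n \<and>
      N = foldr (\<lambda>w acc. outer w + acc) ws (0\<^sub>m n n))"

definition Sigma_set :: "nat \<Rightarrow> 'a::comm_ring_1 mat \<Rightarrow> 'a vec set" where
  "Sigma_set n M = {v \<in> carrier_vec n. \<exists>s N. sum_sq s \<and> sos_mat n N \<and>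
      s \<cdot>\<^sub>m M = outer v + N}"

end

theory Submission
  imports Defs
begin

lemma sum_sq_0: "sum_sq 0" unfolding sum_sq_def by (rule exI[of _ "[]"]) simp
lemma sum_sq_sq: "sum_sq (x*x)" unfolding sum_sq_def by (rule exI[of _ "[x]"]) simp
lemma sum_sq_add: "sum_sq a \<Longrightarrow> sum_sq b \<Longrightarrow> sum_sq (a+b)"
  unfolding sum_sq_def by (metis map_append sum_list_append)

lemma sum_sq_mult_aux:
  fixes xs ys :: "'a::comm_ring_1 list"
  shows "sum_list (map (\<lambda>x. x*x) xs) * sum_list (map (\<lambda>x. x*x) ys)
   = sum_list (map (\<lambda>x. x*x) (concat (map (\<lambda>x. map (\<lambda>y. x*y) ys) xs)))"
proof (induction xs)
  case Nil then show ?case by simp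
next
  case (Cons x xs)
  have "x*x * sum_list (map (\<lambda>x. x*x) ys) = sum_list (map (\<lambda>y. (x*y)*(x*y)) ys)"
    by (induction ys) (simp_all add: algebra_simps)
  then show ?case using Cons by (simp add: algebra_simps o_def)
qed

lemma sum_sq_mult: "sum_sq a \<Longrightarrow> sum_sq b \<Longrightarrow> sum_sq (a*b)"
proof -
  assume "sum_sq a" "sum_sq b"
  then obtain xs ys where "a = sum_list (map (\<lambda>x. x*x) xs)" "b = sum_list (map (\<lambda>x. x*x) ys)"
    unfolding sum_sq_def by blast
  then have "a*b = sum_list (map (\<lambda>x. x*x) (concat (map (\<lambda>x. map (\<lambda>y. x*y) ys) xs)))"
    using sum_sq_mult_aux by simp
  then show ?thesis unfolding sum_sq_def by blast
qed

lemma outer_carrier: "w \<in> carrier_vec n \<Longrightarrow> outer w \<in> carrier_mat n n"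
  unfolding outer_def by auto

lemma foldr_carrier: "set ws \<subseteq> carrier_vec n \<Longrightarrow>
  foldr (\<lambda>w acc. outer w + acc) ws (0\<^sub>m n n) \<in> carrier_mat n n"
  by (induction ws) (auto simp: outer_carrier)

lemma sos_carrier: "sos_mat n N \<Longrightarrow> N \<in> carrier_mat n n"
  unfolding sos_mat_def using foldr_carrier by blast

lemma foldr_append: "set ws1 \<subseteq> carrier_vec n \<Longrightarrow> set ws2 \<subseteq> carrier_vec n \<Longrightarrow>
  foldr (\<lambda>w acc. outer w + acc) (ws1@ws2) (0\<^sub>m n n) =
  foldr (\<lambda>w acc. outer w + acc) ws1 (0\<^sub>m n n) + foldr (\<lambda>w acc. outer w + acc) ws2 (0\<^sub>m n n)"
proof (induction ws1)
  case Nil then show ?case using foldr_carrier[of ws2 n] by simp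
next
  case (Cons w ws)
  then show ?case using foldr_carrier[of ws2 n] foldr_carrier[of ws n] outer_carrier[of w n]
    by (simp add: assoc_add_mat)
qed

lemma sos_add: "sos_mat n N1 \<Longrightarrow> sos_mat n N2 \<Longrightarrow> sos_mat n (N1+N2)"
proof -
  assume a1: "sos_mat n N1" and a2: "sos_mat n N2"
  obtain ws1 where w1: "set ws1 \<subseteq> carrier_vec n" "N1 = foldr (\<lambda>w acc. outer w + acc) ws1 (0\<^sub>m n n)"
    using a1 unfolding sos_mat_def by blast
  obtain ws2 where w2: "set ws2 \<subseteq> carrier_vec n" "N2 = foldr (\<lambda>w acc. outer w + acc) ws2 (0\<^sub>m n n)"
    using a2 unfolding sos_mat_def by blast
  have "set (ws1@ws2) \<subseteq> carrier_vec n" using w1 w2 by auto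
  moreover have "N1 + N2 = foldr (\<lambda>w acc. outer w + acc) (ws1@ws2) (0\<^sub>m n n)"
    using foldr_append[OF w1(1) w2(1)] w1 w2 by simp
  ultimately show ?thesis unfolding sos_mat_def by blast
qed

lemma sos_outer: "w \<in> carrier_vec n \<Longrightarrow> sos_mat n (outer w)"
  unfolding sos_mat_def using outer_carrier[of w n]
  by (intro exI[of _ "[w]"]) simp

lemma sos_zero: "sos_mat n (0\<^sub>m n n)"
  unfolding sos_mat_def by (intro exI[of _ "[]"]) simp

lemma sos_sq_smult: "sos_mat n N \<Longrightarrow> sos_mat n ((x*x) \<cdot>\<^sub>m N)"
proof -
  assume "sos_mat n N"
  then obtain ws where ws: "set ws \<subseteq> carrier_vec n" "N = foldr (\<lambda>w acc. outer w + acc) ws (0\<^sub>m n n)"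
    unfolding sos_mat_def by blast
  have "(x*x) \<cdot>\<^sub>m foldr (\<lambda>w acc. outer w + acc) ws (0\<^sub>m n n)
     = foldr (\<lambda>w acc. outer w + acc) (map (\<lambda>w. x \<cdot>\<^sub>v w) ws) (0\<^sub>m n n)"
    using ws(1)
  proof (induction ws)
    case Nil then show ?case by (intro eq_matI) auto
  next
    case (Cons w ws)
    then have c: "foldr (\<lambda>w acc. outer w + acc) ws (0\<^sub>m n n) \<in> carrier_mat n n"
      using foldr_carrier by auto
    have w: "w \<in> carrier_vec n" using Cons by auto
    have "(x*x) \<cdot>\<^sub>m (outer w + foldr (\<lambda>w acc. outer w + acc) ws (0\<^sub>m n n))
       = outer (x \<cdot>\<^sub>v w) + (x*x) \<cdot>\<^sub>m foldr (\<lambda>w acc. outer w + acc) ws (0\<^sub>m n n)"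
      using c w by (intro eq_matI) (auto simp: outer_def algebra_simps)
    then show ?case using Cons by simp
  qed
  moreover have "set (map (\<lambda>w. x \<cdot>\<^sub>v w) ws) \<subseteq> carrier_vec n" using ws(1) by auto
  ultimately show ?thesis unfolding sos_mat_def using ws by metis
qed

lemma sos_smult: "sum_sq c \<Longrightarrow> sos_mat n N \<Longrightarrow> sos_mat n (c \<cdot>\<^sub>m N)"
proof -
  assume c: "sum_sq c" and N: "sos_mat n N"
  then obtain xs where xs: "c = sum_list (map (\<lambda>x. x*x) xs)" unfolding sum_sq_def by blast
  have "sos_mat n (sum_list (map (\<lambda>x. x*x) xs) \<cdot>\<^sub>m N)"
  proof (induction xs)
    case Nil
    have "0 \<cdot>\<^sub>m N = 0\<^sub>m n n" using sos_carrier[OF N] by (intro eq_matI) auto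
    then show ?case using sos_zero by simp
  next
    case (Cons x xs)
    have "(sum_list (map (\<lambda>x. x*x) (x#xs))) \<cdot>\<^sub>m N
      = (x*x) \<cdot>\<^sub>m N + (sum_list (map (\<lambda>x. x*x) xs)) \<cdot>\<^sub>m N"
      using sos_carrier[OF N] by (intro eq_matI) (auto simp: algebra_simps)
    then show ?case using sos_add[OF sos_sq_smult[OF N] Cons.IH] by simp
  qed
  then show ?thesis using xs by simp
qed

lemma sos_diag: "sos_mat n N \<Longrightarrow> i < n \<Longrightarrow> sum_sq (N $$ (i,i))"
proof -
  assume N: "sos_mat n N" and i: "i < n"
  then obtain ws where ws: "set ws \<subseteq> carrier_vec n" "N = foldr (\<lambda>w acc. outer w + acc) ws (0\<^sub>m n n)"
    unfolding sos_mat_def by blast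
  have "sum_sq (foldr (\<lambda>w acc. outer w + acc) ws (0\<^sub>m n n) $$ (i,i))" using ws(1)
  proof (induction ws)
    case Nil then show ?case using i sum_sq_0 by simp
  next
    case (Cons w ws)
    then have c: "foldr (\<lambda>w acc. outer w + acc) ws (0\<^sub>m n n) \<in> carrier_mat n n"
      using foldr_carrier by auto
    have w: "w \<in> carrier_vec n" using Cons by auto
    have "foldr (\<lambda>w acc. outer w + acc) (w#ws) (0\<^sub>m n n) $$ (i,i)
      = w$i * w$i + foldr (\<lambda>w acc. outer w + acc) ws (0\<^sub>m n n) $$ (i,i)"
      using c w i by (simp add: outer_def)
    then show ?case using Cons sum_sq_add sum_sq_sq by auto
  qed
  then show ?thesis using ws by simp
qed

theorem lemma3p9:
  fixes M :: "'a::comm_ring_1 mat" and a b :: 'a and v :: "'a vec" and n :: nat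
  assumes "M \<in> carrier_mat n n" and "transpose_mat M = M"
    and "v \<in> carrier_vec n"
    and "vec 1 (\<lambda>_. b) \<in> Sigma_set 1 (mat 1 1 (\<lambda>_. a))"
    and "a \<cdot>\<^sub>v v \<in> Sigma_set n M"
  shows "(b ^ 2) \<cdot>\<^sub>v v \<in> Sigma_set n M"
proof -
  obtain s N1 where s: "sum_sq s" "sos_mat 1 N1"
    "s \<cdot>\<^sub>m mat 1 1 (\<lambda>_. a) = outer (vec 1 (\<lambda>_. b)) + N1"
    using assms(4) unfolding Sigma_set_def by blast
  define t where "t = N1 $$ (0,0)"
  have t: "sum_sq t" unfolding t_def using sos_diag[OF s(2)] by simp
  have N1c: "N1 \<in> carrier_mat 1 1" using sos_carrier[OF s(2)] .
  have "(s \<cdot>\<^sub>m mat 1 1 (\<lambda>_. a)) $$ (0,0) = (outer (vec 1 (\<lambda>_. b)) + N1) $$ (0,0)"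
    using s(3) by simp
  then have sa: "s * a = b*b + t" using N1c unfolding t_def by (simp add: outer_def)
  obtain s' N where s': "sum_sq s'" "sos_mat n N" "s' \<cdot>\<^sub>m M = outer (a \<cdot>\<^sub>v v) + N"
    using assms(5) unfolding Sigma_set_def by blast
  have Nc: "N \<in> carrier_mat n n" using sos_carrier[OF s'(2)] .
  define N' where "N' = ((b*b)*t + (b*b)*t + t*t) \<cdot>\<^sub>m outer v + (s*s) \<cdot>\<^sub>m N"
  have bt: "sum_sq ((b*b)*t)" using sum_sq_mult[OF sum_sq_sq t] .
  have c1: "sum_sq ((b*b)*t + (b*b)*t + t*t)" using sum_sq_add[OF sum_sq_add[OF bt bt] sum_sq_sq] .
  have N': "sos_mat n N'" unfolding N'_def
    using sos_add[OF sos_smult[OF c1 sos_outer[OF assms(3)]] sos_sq_smult[OF s'(2)]] .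
  have "(s*s*s') \<cdot>\<^sub>m M = outer ((b ^ 2) \<cdot>\<^sub>v v) + N'"
  proof (rule eq_matI)
    fix i j assume ij: "i < dim_row (outer ((b ^ 2) \<cdot>\<^sub>v v) + N')"
      "j < dim_col (outer ((b ^ 2) \<cdot>\<^sub>v v) + N')"
    then have i: "i < n" and j: "j < n" using assms(3) sos_carrier[OF N'] by (auto simp: outer_def)
    have h: "s' * M $$ (i,j) = (a * v$i) * (a * v$j) + N $$ (i,j)"
      using arg_cong[OF s'(3), of "\<lambda>X. X $$ (i,j)"] i j assms(1,3) Nc
      by (simp add: outer_def)
    have "((s*s*s') \<cdot>\<^sub>m M) $$ (i,j) = s*s*(s' * M $$ (i,j))"
      using i j assms(1) by simp
    also have "\<dots> = (s*a)*(s*a)*(v$i*v$j) + s*s*N $$ (i,j)" unfolding h by (simp add: algebra_simps)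
    also have "\<dots> = (b*b+t)*(b*b+t)*(v$i*v$j) + s*s*N $$ (i,j)" unfolding sa ..
    also have "\<dots> = (outer ((b ^ 2) \<cdot>\<^sub>v v) + N') $$ (i,j)"
      using i j assms(3) Nc unfolding N'_def by (simp add: outer_def algebra_simps power2_eq_square)
    finally show "((s*s*s') \<cdot>\<^sub>m M) $$ (i,j) = (outer ((b ^ 2) \<cdot>\<^sub>v v) + N') $$ (i,j)" .
  next
    show "dim_row ((s*s*s') \<cdot>\<^sub>m M) = dim_row (outer ((b ^ 2) \<cdot>\<^sub>v v) + N')"
      using assms(1,3) sos_carrier[OF N'] by (simp add: outer_def)
  next
    show "dim_col ((s*s*s') \<cdot>\<^sub>m M) = dim_col (outer ((b ^ 2) \<cdot>\<^sub>v v) + N')"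
      using assms(1,3) sos_carrier[OF N'] by (simp add: outer_def)
  qed
  moreover have "sum_sq (s*s*s')" using sum_sq_mult[OF sum_sq_sq s'(1)] .
  moreover have "(b ^ 2) \<cdot>\<^sub>v v \<in> carrier_vec n" using assms(3) by simp
  ultimately show ?thesis using N' unfolding Sigma_set_def by blast
qed

end
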